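(* Let $p$ be a prime and $k,\ell$ integers with $k>0$, $\ell\ge0$; put $q=p^k$ and $Q=p^{\ell}$. For any $c\in\mathbb{F}_q^*$, let \[ f_6(X)=X^{3q}-3X^{2q+1}+3X^{q+2}-X^3+cX^{q^2Q}+cX^{qQ}+cX^{Q}. \] Then $f_6(X)$ permutes $\mathbb{F}_{q^3}$ if and only if $q\equiv 2\pmod 3$.
   Context: A polynomial permutes $\mathbb{F}_{q^3}$ if the induced map $\mathbb{F}_{q^3}\to\mathbb{F}_{q^3}$ is a bijection. *)

theory Defs
  imports "HOL-Computational_Algebra.Primes"
begin

definition f6 :: "nat \<Rightarrow> nat \<Rightarrow> 'a::field \<Rightarrow> 'a \<Rightarrow> 'a" where
  "f6 q Q c x = x ^ (3*q) - 3 * x ^ (2*q+1) + 3 * x ^ (q+2) - x ^ 3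
      + c * x ^ (q^2 * Q) + c * x ^ (q * Q) + c * x ^ Q"

end

theory Submission
  imports Defs "HOL-Computational_Algebra.Polynomial"
begin

lemma fermat_ff:
  fixes x :: "'a::{field,finite}"
  shows "x ^ card (UNIV :: 'a set) = x"
proof (cases "x = 0")
  case False
  have "x * (\<Prod>y\<in>UNIV-{0}. x * y) = x * x ^ (card (UNIV :: 'a set) - 1) * \<Prod>(UNIV-{0})"
    by (simp add: prod.distrib mult_ac)
  also have "x * x ^ (card (UNIV :: 'a set) - 1) = x ^ Suc (card (UNIV :: 'a set) - 1)"
    by (subst power_Suc) auto
  also have "Suc (card (UNIV :: 'a set) - 1) = card (UNIV :: 'a set)"
    using finite_UNIV_card_ge_0[where ?'a = 'a] by simp
  also have "(\<Prod>y\<in>UNIV-{0}. x * y) = (\<Prod>y\<in>UNIV-{0}. y)"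
    by (rule prod.reindex_bij_witness[of _ "\<lambda>y. y / x" "\<lambda>y. x * y"]) (use False in auto)
  finally show ?thesis
    by simp
qed (use finite_UNIV_card_ge_0[where ?'a = 'a] in auto)

lemma card_zero_ff: "of_nat (card (UNIV::'a::{field,finite} set)) = (0::'a)"
proof -
  have "(\<Sum>x\<in>UNIV. x + 1) = (\<Sum>x\<in>UNIV. (x::'a))"
    by (rule sum.reindex_bij_witness[of _ "\<lambda>y. y - 1" "\<lambda>y. y + 1"]) auto
  then show ?thesis by (simp add: sum.distrib)
qed

lemma prime_CHAR_ff: "prime CHAR('a::{field,finite})"
  by (rule prime_CHAR_semidom) (rule finite_imp_CHAR_pos, simp)

lemma char_eq:
  assumes "prime p" "card (UNIV::'a::{field,finite} set) = (p^k)^3" "k > 0"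
  shows "CHAR('a) = p"
proof -
  have "CHAR('a) dvd p^(k*3)"
    using card_zero_ff[where 'a='a] assms(2) of_nat_eq_0_iff_char_dvd
    by (metis power_mult)
  then have "CHAR('a) dvd p" using prime_CHAR_ff[where 'a='a] prime_dvd_power by blast
  then show ?thesis using prime_CHAR_ff[where 'a='a] assms(1)
    by (simp add: primes_dvd_imp_eq)
qed

lemma frob_add:
  fixes x y :: "'a::{field,finite}"
  shows "(x + y) ^ (CHAR('a)^n) = x ^ (CHAR('a)^n) + y ^ (CHAR('a)^n)"
  by (rule freshmans_dream'[OF prime_CHAR_ff]) simp

lemma frob_diff:
  fixes x y :: "'a::{field,finite}"
  shows "(x - y) ^ (CHAR('a)^n) = x ^ (CHAR('a)^n) - y ^ (CHAR('a)^n)"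
  using frob_add[of "x - y" y n] by (simp add: algebra_simps)

lemma roots_bound:
  fixes a b :: "'a::field"
  assumes "n \<ge> 2"
  shows "card {x. x ^ n = a * x + b} \<le> n"
proof -
  define P where "P = monom 1 n - [:b, a:]"
  have d: "degree [:b, a:] < degree (monom (1::'a) n)"
    using assms by (simp add: degree_monom_eq)
  have e: "P = monom 1 n + (- [:b, a:])" unfolding P_def by simp
  have dP: "degree P = n" unfolding e using d
    by (subst degree_add_eq_left) (use assms in \<open>simp_all add: degree_monom_eq\<close>)
  have "P \<noteq> 0" using dP assms by auto
  then have "card {x. poly P x = 0} \<le> degree P" by (rule card_poly_roots_bound)
  moreover have "{x. poly P x = 0} = {x. x ^ n = a * x + b}"
    by (auto simp: P_def poly_monom algebra_simps)
  ultimately show ?thesis using dP by simp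
qed


lemma frob_basic:
  fixes q :: nat
  assumes add: "\<And>x y::'a::field. (x+y)^q = x^q + y^q"
  shows "(0::'a)^q = 0" "\<And>x::'a. (-x)^q = - (x^q)" "\<And>x y::'a. (x-y)^q = x^q - y^q"
proof -
  show z: "(0::'a)^q = 0" using add[of 0 0] by (metis add_0 add_cancel_left_right)
  show n: "\<And>x::'a. (-x)^q = - (x^q)"
  proof -
    fix x :: 'a
    have "(x + -x)^q = x^q + (-x)^q" by (rule add)
    then have "x^q + (-x)^q = 0" using z by simp
    then show "(-x)^q = - (x^q)" by (metis add.commute eq_neg_iff_add_eq_0)
  qed
  show "\<And>x y::'a. (x-y)^q = x^q - y^q"
    using add n by (metis diff_conv_add_uminus)
qed

lemma f6_alt:
  fixes x c :: "'a::field"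
  assumes addQ: "\<And>x y::'a. (x+y)^Q = x^Q + y^Q"
  shows "f6 q Q c x = (x^q - x)^3 + c * ((x^q)^q + x^q + x)^Q"
proof -
  have e1: "((x^q)^q + x^q + x)^Q = x^(q^2*Q) + x^(q*Q) + x^Q"
    using addQ by (simp add: power_mult[symmetric] power2_eq_square)
  have e2: "x^(3*q) = (x^q)^3" "x^(2*q+1) = (x^q)^2 * x" "x^(q+2) = x^q * x^2"
    by (metis power_mult mult.commute, metis power_mult mult.commute power_add power_one_right, rule power_add)
  show ?thesis unfolding f6_def e1 e2
    by (simp add: algebra_simps power2_eq_square power3_eq_cube)
qed

lemma Kzero:
  fixes u :: "'a::field"
  assumes add: "\<And>x y::'a. (x+y)^q = x^q + y^q"
    and cube: "\<And>x::'a. (x^3)^m = x"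
    and three: "(3::'a) \<noteq> 0"
    and fu: "(u^3)^q = u^3"
    and tu: "u + u^q + (u^q)^q = 0"
  shows "u = 0"
proof -
  have "u^q = ((u^3)^m)^q" using cube[of u] by simp
  also have "\<dots> = ((u^3)^q)^m" by (metis power_mult mult.commute)
  also have "\<dots> = u" using fu cube by simp
  finally have uq: "u^q = u" .
  then have "3 * u = 0" using tu by simp
  then show ?thesis using three by simp
qed

lemma Lmain:
  fixes u v :: "'a::field"
  assumes add: "\<And>x y::'a. (x+y)^q = x^q + y^q"
    and fix3: "\<And>x::'a. ((x^q)^q)^q = x"
    and cube: "\<And>x::'a. (x^3)^m = x"
    and three: "(3::'a) \<noteq> 0"
    and tu: "u + u^q + (u^q)^q = 0"
    and tv: "v + v^q + (v^q)^q = 0"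
    and fd: "(u^3 - v^3)^q = u^3 - v^3"
  shows "u = v"
proof -
  note fb = frob_basic[OF add]
  have mul: "\<And>x y::'a. (x*y)^q = x^q * y^q" by (simp add: power_mult_distrib)
  define u1 where "u1 = u^q"
  define u2 where "u2 = u1^q"
  define v1 where "v1 = v^q"
  define v2 where "v2 = v1^q"
  have u2q: "u2^q = u" using fix3[of u] by (simp add: u1_def u2_def)
  have v2q: "v2^q = v" using fix3[of v] by (simp add: v1_def v2_def)
  define A where "A = u*u1 + u*u2 + u1*u2"
  define B where "B = u*u1*u2"
  define C where "C = v*v1 + v*v2 + v1*v2"
  define D where "D = v*v1*v2"
  have hA: "A^q = A" unfolding A_def using add mul u2q
    by (simp add: u1_def[symmetric] u2_def[symmetric] algebra_simps)
  have hB: "B^q = B" unfolding B_def using mul u2q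
    by (simp add: u1_def[symmetric] u2_def[symmetric] algebra_simps)
  have hC: "C^q = C" unfolding C_def using add mul v2q
    by (simp add: v1_def[symmetric] v2_def[symmetric] algebra_simps)
  have hD: "D^q = D" unfolding D_def using mul v2q
    by (simp add: v1_def[symmetric] v2_def[symmetric] algebra_simps)
  have tu': "u2 = - u - u1" using tu unfolding u1_def u2_def by (simp add: eq_neg_iff_add_eq_0 algebra_simps)
  have tv': "v2 = - v - v1" using tv unfolding v1_def v2_def by (simp add: eq_neg_iff_add_eq_0 algebra_simps)
  have cu: "u^3 = B - A*u" unfolding A_def B_def tu'
    by (simp add: algebra_simps power2_eq_square power3_eq_cube)
  have cv: "v^3 = D - C*v" unfolding C_def D_def tv'
    by (simp add: algebra_simps power2_eq_square power3_eq_cube)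
  define r where "r = C*v - A*u"
  have hr: "r = (u^3 - v^3) - B + D" unfolding r_def cu cv by simp
  have r1: "r^q = r" unfolding hr using fb(3) add fd hB hD by simp
  have r2: "r^q = C*v1 - A*u1" unfolding r_def using fb(3) mul hA hC
    by (simp add: u1_def v1_def)
  have "(C*v1 - A*u1)^q = (C*v1)^q - (A*u1)^q" by (rule fb(3))
  also have "\<dots> = C*v2 - A*u2" using mul hA hC by (simp add: u2_def v2_def)
  finally have r3: "(C*v1 - A*u1)^q = C*v2 - A*u2" .
  have "3 * r = r + r^q + (r^q)^q" using r1 by simp
  also have "\<dots> = C*(v+v1+v2) - A*(u+u1+u2)" unfolding r2 r3 by (simp add: r_def algebra_simps)
  also have "\<dots> = 0" using tu' tv' by simp
  finally have "r = 0" using three by simp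
  then have CA: "C*v = A*u" unfolding r_def by simp
  show ?thesis
  proof (cases "A = 0")
    case True
    then have "(u^3)^q = u^3" using cu hB by simp
    then have u0: "u = 0" using Kzero[OF add cube three _ tu] by simp
    then have "C*v = 0" using CA by simp
    then have "v^3 = D" using cv by simp
    then have "(v^3)^q = v^3" using hD by simp
    then have "v = 0" using Kzero[OF add cube three _ tv] by simp
    then show ?thesis using u0 by simp
  next
    case False
    define l where "l = C/A"
    have hl: "l^q = l" unfolding l_def using hA hC by (simp add: power_divide)
    have ul: "u = l * v" unfolding l_def using CA False by (simp add: field_simps)
    show ?thesis
    proof (cases "l^3 = 1")
      case True
      then have "l = 1" using cube[of l] by simp
      then show ?thesis using ul by simp
    next
      case False
      have d: "u^3 - v^3 = (l^3 - 1) * v^3" unfolding ul by (simp add: algebra_simps power_mult_distrib)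
      have "(l^3)^q = l^3" using hl by (metis power_mult mult.commute)
      then have l3: "(l^3 - 1)^q = l^3 - 1" using fb(3) by simp
      have ve: "v^3 = (u^3 - v^3) / (l^3 - 1)" using d False by simp
      have "(v^3)^q = ((u^3 - v^3) / (l^3 - 1))^q" using ve by (rule arg_cong)
      also have "\<dots> = (u^3 - v^3) / (l^3 - 1)" by (simp only: power_divide fd l3)
      also have "\<dots> = v^3" using ve by simp
      finally have "(v^3)^q = v^3" .
      then have v0: "v = 0" using Kzero[OF add cube three _ tv] by simp
      then show ?thesis using ul by simp
    qed
  qed
qed


lemma inj_case:
  fixes c :: "'a::field"
  assumes add: "\<And>x y::'a. (x+y)^q = x^q + y^q"
    and addQ: "\<And>x y::'a. (x+y)^Q = x^Q + y^Q"
    and fix3: "\<And>x::'a. ((x^q)^q)^q = x"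
    and cube: "\<And>x::'a. (x^3)^m = x"
    and three: "(3::'a) \<noteq> 0"
    and cq: "c^q = c" and c0: "c \<noteq> 0"
  shows "inj (f6 q Q c)"
proof (rule injI)
  note fb = frob_basic[OF add]
  note fbQ = frob_basic[OF addQ]
  fix x1 x2 :: 'a
  assume eq: "f6 q Q c x1 = f6 q Q c x2"
  have tr0: "(x^q - x) + (x^q - x)^q + ((x^q - x)^q)^q = 0" for x :: 'a
    using fb(3) fix3[of x] by simp
  have Tq: "((x^q)^q + x^q + x)^q = (x^q)^q + x^q + x" for x :: 'a
    using add fix3[of x] by (simp add: algebra_simps)
  define u where "u = x1^q - x1"
  define v where "v = x2^q - x2"
  define T1 where "T1 = (x1^q)^q + x1^q + x1"
  define T2 where "T2 = (x2^q)^q + x2^q + x2"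
  have e: "u^3 + c * T1^Q = v^3 + c * T2^Q"
    using eq unfolding f6_alt[OF addQ] u_def v_def T1_def T2_def .
  have d: "u^3 - v^3 = c * (T2^Q - T1^Q)" using e by (simp add: algebra_simps)
  have TQ: "(T^Q)^q = (T^q)^Q" for T :: 'a by (metis power_mult mult.commute)
  have "(c * (T2^Q - T1^Q))^q = c * (T2^Q - T1^Q)"
    using cq fb(3) TQ Tq unfolding T1_def T2_def by (simp add: power_mult_distrib)
  then have fd: "(u^3 - v^3)^q = u^3 - v^3" using d by simp
  have uv: "u = v"
    by (rule Lmain[OF add fix3 cube three _ _ fd]) (use tr0 in \<open>simp_all add: u_def v_def\<close>)
  then have "c * T1^Q = c * T2^Q" using e by simp
  then have "T1^Q = T2^Q" using c0 by simp
  then have "(T1 - T2)^Q = 0" using fbQ(3) by simp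
  then have T12: "T1 = T2" by simp
  define w where "w = x1 - x2"
  have "w^q = x1^q - x2^q" unfolding w_def by (rule fb(3))
  also have "x1^q - x2^q = x1 - x2" using uv unfolding u_def v_def by (simp add: algebra_simps)
  finally have wq: "w^q = w" unfolding w_def .
  have "(w^q)^q + w^q + w = T1 - T2" unfolding w_def T1_def T2_def
    by (simp add: fb(3) algebra_simps)
  then have "3 * w = 0" using wq T12 by simp
  then show "x1 = x2" using three unfolding w_def by simp
qed


lemma noninj_case:
  fixes c x1 z :: "'a::field"
  assumes add: "\<And>x y::'a. (x+y)^q = x^q + y^q"
    and addQ: "\<And>x y::'a. (x+y)^Q = x^Q + y^Q"
    and fix3: "\<And>x::'a. ((x^q)^q)^q = x"
    and three: "(3::'a) \<noteq> 0"
    and x1: "x1^q \<noteq> x1"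
    and z3: "z^3 = 1" and z1: "z \<noteq> 1" and zq: "z^q = z"
  shows "\<not> inj (f6 q Q c)"
proof
  assume inj: "inj (f6 q Q c)"
  note fb = frob_basic[OF add]
  have one: "(1::'a)^q = 1" by simp
  have three_q: "(3::'a)^q = 3"
  proof -
    have e: "(1 + 1 + 1 :: 'a) = 3" by simp
    have "(1 + 1 + 1 :: 'a)^q = 1 + 1 + 1" by (simp only: add one)
    then show ?thesis by (simp only: e)
  qed
  define T1 where "T1 = (x1^q)^q + x1^q + x1"
  have T1q: "T1^q = T1" unfolding T1_def using add fix3[of x1] by (simp add: algebra_simps)
  define a where "a = (1 - z) * T1 / 3"
  have aq: "a^q = a" unfolding a_def
    by (simp add: power_divide power_mult_distrib fb(3) zq T1q three_q)
  define x2 where "x2 = z * x1 + a"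
  have x2q: "x2^q = z * x1^q + a" unfolding x2_def by (simp add: add power_mult_distrib zq aq)
  have x2qq: "(x2^q)^q = z * (x1^q)^q + a" unfolding x2q by (simp add: add power_mult_distrib zq aq)
  have u: "(x2^q - x2)^3 = (x1^q - x1)^3"
  proof -
    have "x2^q - x2 = z * (x1^q - x1)" by (subst x2q) (simp add: x2_def algebra_simps)
    then show ?thesis by (simp add: power_mult_distrib z3)
  qed
  have T: "(x2^q)^q + x2^q + x2 = T1"
  proof -
    have "(x2^q)^q + x2^q + x2 = z * T1 + 3 * a"
      by (subst x2qq, subst x2q) (simp add: T1_def x2_def algebra_simps)
    also have "\<dots> = T1" unfolding a_def using three by (simp add: field_simps)
    finally show ?thesis .
  qed
  have "f6 q Q c x2 = f6 q Q c x1" unfolding f6_alt[OF addQ] u T T1_def ..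
  then have "x2 = x1" using inj by (simp add: inj_eq)
  then have "x1 * (1 - z) = a" unfolding x2_def by (simp add: algebra_simps)
  then have xe: "x1 = a / (1 - z)" using z1 by (simp add: field_simps)
  have "x1^q = a / (1 - z)" unfolding xe by (simp add: power_divide fb(3) zq aq)
  then show False using x1 xe by simp
qed


theorem corollary1p9:
  fixes p k l :: nat and c :: "'a::{field,finite}"
  assumes "prime p" and "k > 0"
    and "card (UNIV :: 'a set) = (p ^ k) ^ 3"
    and "c ^ (p ^ k) = c" and "c \<noteq> 0"
  shows "bij (f6 (p ^ k) (p ^ l) c) \<longleftrightarrow> (p ^ k) mod 3 = 2"
proof -
  note pr = assms(1) and k0 = assms(2) and cardF = assms(3) and cq = assms(4) and c0 = assms(5)
  define q where "q = p ^ k"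
  define Q where "Q = p ^ l"
  define N where "N = card (UNIV :: 'a set)"
  have ch: "CHAR('a) = p" using char_eq[OF pr cardF k0] .
  have p2: "p \<ge> 2" using pr by (simp add: prime_ge_2_nat)
  have "p \<le> p^k" using p2 k0 by (intro self_le_power) auto
  then have q2: "q \<ge> 2" unfolding q_def using p2 by linarith
  have Q0: "Q > 0" unfolding Q_def using p2 by simp
  have NQ: "N = q^3" unfolding N_def q_def using cardF .
  have add: "\<And>x y::'a. (x+y)^q = x^q + y^q" unfolding q_def ch[symmetric] by (rule frob_add)
  have addQ: "\<And>x y::'a. (x+y)^Q = x^Q + y^Q" unfolding Q_def ch[symmetric] by (rule frob_add)
  have fermat: "\<And>x::'a. x^N = x" unfolding N_def by (rule fermat_ff)
  have fix3: "\<And>x::'a. ((x^q)^q)^q = x"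
  proof -
    fix x :: 'a
    have "((x^q)^q)^q = x^(q^3)" by (simp add: power_mult[symmetric] power3_eq_cube)
    then show "((x^q)^q)^q = x" using fermat NQ by simp
  qed
  have N1: "N \<ge> 1" using NQ q2 by simp
  have finU: "finite (UNIV :: 'a set)" by simp
  have bij_inj: "bij f \<longleftrightarrow> inj f" for f :: "'a \<Rightarrow> 'a"
    using finite_UNIV_inj_surj[OF finU] bij_def by blast
  show ?thesis
  proof (cases "p = 3")
    case True
    have "q mod 3 = 0" unfolding q_def using True k0 by (simp add: power_eq_if)
    moreover have "\<not> bij (f6 q Q c)"
    proof
      assume "bij (f6 q Q c)"
      then have inj: "inj (f6 q Q c)" by (simp add: bij_is_inj)
      have three: "(3::'a) = 0" using of_nat_CHAR[where 'a='a] ch True by simp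
      have pos: "0 < 3*q" "0 < q^2*Q" "0 < q*Q" using q2 Q0 by auto
      have "f6 q Q c 0 = 0" using q2 Q0 by (simp add: f6_def power_0_left)
      moreover have "f6 q Q c 1 = 0" using three by (simp add: f6_def algebra_simps)
      ultimately have "(0::'a) = 1" using inj by (metis injD)
      then show False by simp
    qed
    ultimately show ?thesis unfolding q_def Q_def by simp
  next
    case False
    have three: "(3::'a) \<noteq> 0"
    proof
      assume "(3::'a) = 0"
      then have "of_nat 3 = (0::'a)" by simp
      then have "p dvd 3" using of_nat_eq_0_iff_char_dvd ch by metis
      moreover have "p \<le> 3" using calculation by (rule dvd_imp_le) simp
      ultimately show False using False p2 by (cases "p = 2") auto
    qed
    have qm: "q mod 3 \<noteq> 0"
    proof
      assume "q mod 3 = 0"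
      then have "3 dvd p^k" unfolding q_def by auto
      then have "3 dvd p" using prime_dvd_power[of 3 p k] by simp
      then have "(3::nat) = 1 \<or> 3 = p" using pr unfolding prime_nat_iff by blast
      then show False using False by auto
    qed
    show ?thesis
    proof (cases "q mod 3 = 2")
      case True
      have "q^3 mod 3 = (q mod 3)^3 mod 3" by (simp add: power_mod)
      then have Nm: "N mod 3 = 2" unfolding NQ using True by simp
      define m where "m = (2*N - 1) div 3"
      have m3: "3 * m = N + (N - 1)" unfolding m_def using Nm by presburger
      have cube: "\<And>x::'a. (x^3)^m = x"
      proof -
        fix x :: 'a
        have "(x^3)^m = x^N * x^(N-1)" by (simp add: power_mult[symmetric] m3 power_add)
        also have "\<dots> = x * x^(N-1)" using fermat[of x] by simp
        also have "\<dots> = x^(Suc (N-1))" by simp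
        also have "\<dots> = x^N" using N1 by simp
        finally show "(x^3)^m = x" using fermat by simp
      qed
      have "inj (f6 q Q c)" by (rule inj_case[OF add addQ fix3 cube three _ c0]) (use cq in \<open>simp add: q_def\<close>)
      then show ?thesis using True bij_inj unfolding q_def Q_def by simp
    next
      case False
      then have q1: "q mod 3 = 1" using qm by simp
      have "\<exists>x1::'a. x1^q \<noteq> x1"
      proof (rule ccontr)
        assume "\<not> ?thesis"
        then have "{x::'a. x^q = 1 * x + 0} = UNIV" by simp
        then have "N \<le> q" using roots_bound[OF q2, of "1::'a" 0] unfolding N_def by simp
        moreover have "q * 1 < q * (q * q)"
        proof (rule mult_strict_left_mono)
          have "2 * 2 \<le> q * q" using q2 by (intro mult_le_mono) auto
          then show "1 < q * q" by linarith
        qed (use q2 in auto)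
        ultimately show False unfolding NQ by (simp add: power3_eq_cube)
      qed
      then obtain x1 :: 'a where x1: "x1^q \<noteq> x1" by blast
      have "q^3 mod 3 = (q mod 3)^3 mod 3" by (simp add: power_mod)
      then have Nm: "N mod 3 = 1" unfolding NQ using q1 by simp
      define M where "M = (N - 1) div 3"
      have M3: "3 * M = N - 1" unfolding M_def using Nm by presburger
      have q4: "q \<ge> 4" using q1 q2 by presburger
      have "N \<ge> 64" unfolding NQ using q4 power_mono[OF q4, of 3] by simp
      then have M2: "M \<ge> 2" and MN: "M + 1 < N" using M3 by linarith+
      have "\<exists>a::'a. a \<noteq> 0 \<and> a^M \<noteq> 1"
      proof (rule ccontr)
        assume "\<not> ?thesis"
        then have "UNIV \<subseteq> insert 0 {x::'a. x^M = 0 * x + 1}" by auto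
        then have "N \<le> card (insert 0 {x::'a. x^M = 0 * x + 1})" unfolding N_def
          by (intro card_mono) auto
        also have "\<dots> \<le> Suc (card {x::'a. x^M = 0 * x + 1})" by (rule card_insert_le_m1) auto
        also have "\<dots> \<le> Suc M" using roots_bound[OF M2, of "0::'a" 1] by simp
        finally show False using MN by simp
      qed
      then obtain a :: 'a where a0: "a \<noteq> 0" and aM: "a^M \<noteq> 1" by blast
      define z where "z = a^M"
      have z3: "z^3 = 1"
      proof -
        have "(a^M)^3 = a^(3*M)" by (metis power_mult mult.commute)
        then have "z^3 = a^(N-1)" unfolding z_def M3 .
        moreover have "a * a^(N-1) = a * 1"
        proof -
          have "a * a^(N-1) = a^(Suc (N-1))" by simp
          also have "\<dots> = a" using N1 fermat[of a] by simp
          finally show ?thesis by simp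
        qed
        ultimately show ?thesis using a0 by simp
      qed
      have zq: "z^q = z"
      proof -
        have "q = 3 * (q div 3) + 1" using q1 by presburger
        then have "z^q = z^(3 * (q div 3) + 1)" by (rule arg_cong)
        also have "\<dots> = (z^3)^(q div 3) * z" by (simp add: power_add power_mult)
        finally have "z^q = (z^3)^(q div 3) * z" .
        then show ?thesis using z3 by simp
      qed
      have "\<not> inj (f6 q Q c)"
        by (rule noninj_case[OF add addQ fix3 three x1 z3 _ zq]) (use aM z_def in simp)
      then show ?thesis using q1 bij_inj unfolding q_def Q_def by simp
    qed
  qed
qed

end
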